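(* Let $n\ge 1$ and let $f\in\mathcal{G}_1$ be $n$-ary, $f=2x_1\cdots x_n\left(\sum_{i=1}^n a_ix_i^2+\sum_{i=1}^n b_ix_i+c\right)$, with $a_i\ne 0$ for some $i$. If $f\in\mathcal{G}_0$, then $C(f)=C(2w_n)$. If $f\in\mathcal{G}_1\setminus\mathcal{G}_0$, then $C(f)=C(2q_n)$.
   Context: All operations are on $\mathbb{Z}_8$. $\mathcal{G}_1$ is the set of all operations (of any arity $n\ge1$) given by $2x_1\cdots x_n\left(\sum_{i=1}^n a_ix_i^2+\sum_{i=1}^n b_ix_i+c\right)$ with $a_i,b_i\in\{0,1\}$ and $c\in\{0,1,2,3\}$; $\mathcal{G}_0$ is the subset of those for which $\sum_{i=1}^na_i+\sum_{i=1}^nb_i+c$ is even. For an operation $f$, $C(f)$ denotes the clone generated by $f$ together with binary addition and all unary constant operations. $w_n=x_1\cdots x_n(x_1^2+1)$, $q_n=x_1^3x_2\cdots x_n$. *)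

theory Defs
  imports Main "HOL-Library.Numeral_Type"
begin

text \<open>Elements of Z_8 are the elements of the ring type 8 (integers modulo 8).
An m-ary operation is a function (nat => 8) => 8 reading its arguments x 0, ..., x (m-1).
A generating operation is a pair (arity k, function).\<close>

type_synonym z8 = "8"
type_synonym z8op = "(nat \<Rightarrow> z8) \<Rightarrow> z8"

inductive_set clone_gen :: "(nat \<times> z8op) set \<Rightarrow> nat \<Rightarrow> z8op set"
  for F :: "(nat \<times> z8op) set" and m :: nat where
  proj: "i < m \<Longrightarrow> (\<lambda>x. x i) \<in> clone_gen F m"
| comp: "(k, g) \<in> F \<Longrightarrow> (\<And>j. j < k \<Longrightarrow> h j \<in> clone_gen F m) \<Longrightarrow>
          (\<lambda>x. g (\<lambda>j. if j < k then h j x else 0)) \<in> clone_gen F m"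

definition clone_of :: "(nat \<times> z8op) set \<Rightarrow> (nat \<times> z8op) set" where
  "clone_of F = {(m, h). 1 \<le> m \<and> h \<in> clone_gen F m}"

definition C :: "nat \<Rightarrow> z8op \<Rightarrow> (nat \<times> z8op) set" where
  "C k f = clone_of ({(k, f), (2, \<lambda>x. x 0 + x 1)} \<union> {(1, \<lambda>x. c) | c. True})"

text \<open>The operation 2 x_1...x_n (sum a_i x_i^2 + sum b_i x_i + c) (indices shifted to 0..n-1).\<close>
definition gop :: "nat \<Rightarrow> (nat \<Rightarrow> nat) \<Rightarrow> (nat \<Rightarrow> nat) \<Rightarrow> nat \<Rightarrow> z8op" where
  "gop n a b c = (\<lambda>x. 2 * (\<Prod>i<n. x i) *
      ((\<Sum>i<n. of_nat (a i) * x i ^ 2) + (\<Sum>i<n. of_nat (b i) * x i) + of_nat c))"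

definition in_G1 :: "nat \<Rightarrow> (nat \<Rightarrow> nat) \<Rightarrow> (nat \<Rightarrow> nat) \<Rightarrow> nat \<Rightarrow> bool" where
  "in_G1 n a b c \<longleftrightarrow> (\<forall>i<n. a i \<in> {0,1} \<and> b i \<in> {0,1}) \<and> c \<in> {0,1,2,3}"

definition in_G0 :: "nat \<Rightarrow> (nat \<Rightarrow> nat) \<Rightarrow> (nat \<Rightarrow> nat) \<Rightarrow> nat \<Rightarrow> bool" where
  "in_G0 n a b c \<longleftrightarrow> in_G1 n a b c \<and> even ((\<Sum>i<n. a i) + (\<Sum>i<n. b i) + c)"

text \<open>w_n = x_1...x_n (x_1^2 + 1), q_n = x_1^3 x_2 ... x_n (indices shifted to 0..n-1).\<close>
definition w_op :: "nat \<Rightarrow> z8op" where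
  "w_op n = (\<lambda>x. (\<Prod>i<n. x i) * (x 0 ^ 2 + 1))"

definition q_op :: "nat \<Rightarrow> z8op" where
  "q_op n = (\<lambda>x. x 0 ^ 3 * (\<Prod>i\<in>{1..<n}. x i))"

end

theory Submission
  imports Defs
begin


definition goodF :: "(nat \<times> z8op) set \<Rightarrow> bool" where
  "goodF F \<longleftrightarrow> (2, \<lambda>x. x 0 + x 1) \<in> F \<and> (\<forall>c. (1, \<lambda>x. c) \<in> F)"

lemma cg_proj: "i < m \<Longrightarrow> (\<lambda>x. x i) \<in> clone_gen F m"
  by (rule clone_gen.proj)

lemma cg_depends:
  assumes "g \<in> clone_gen F k"
  shows "(\<forall>j<k. y j = z j) \<Longrightarrow> g y = g z"
  using assms
proof (induction arbitrary: y z)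
  case (proj i)
  then show ?case by simp
next
  case (comp k' g h)
  have "(\<lambda>j. if j < k' then h j y else 0) = (\<lambda>j. if j < k' then h j z else 0)"
    using comp by auto
  then show ?case by simp
qed

lemma cg_subst:
  assumes "g \<in> clone_gen F k"
  shows "(\<And>j. j < k \<Longrightarrow> h j \<in> clone_gen F m) \<Longrightarrow>
     (\<lambda>x. g (\<lambda>j. if j < k then h j x else 0)) \<in> clone_gen F m"
  using assms
proof (induction)
  case (proj i)
  then show ?case by (simp add: proj)
next
  case (comp k' g' h')
  have "(\<lambda>x. g' (\<lambda>j. if j < k' then h' j (\<lambda>j. if j < k then h j x else 0) else 0)) \<in> clone_gen F m"
    by (rule clone_gen.comp[OF comp(1)]) (use comp in auto)
  then show ?case by simp
qed

lemma cg_subst':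
  assumes "g \<in> clone_gen F m" and "\<And>j. j < m \<Longrightarrow> h j \<in> clone_gen F m"
  shows "(\<lambda>x. g (\<lambda>j. h j x)) \<in> clone_gen F m"
proof -
  have "(\<lambda>x. g (\<lambda>j. if j < m then h j x else 0)) \<in> clone_gen F m"
    using cg_subst[OF assms(1)] assms(2) by blast
  moreover have "(\<lambda>x. g (\<lambda>j. if j < m then h j x else 0)) = (\<lambda>x. g (\<lambda>j. h j x))"
    using cg_depends[OF assms(1)] by (auto intro!: ext)
  ultimately show ?thesis by simp
qed

lemma cg_mono:
  assumes "\<And>k g. (k, g) \<in> F1 \<Longrightarrow> g \<in> clone_gen F2 k"
  shows "g \<in> clone_gen F1 m \<Longrightarrow> g \<in> clone_gen F2 m"
proof (induction rule: clone_gen.induct)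
  case (proj i)
  then show ?case by (rule clone_gen.proj)
next
  case (comp k g h)
  show ?case using cg_subst[OF assms[OF comp(1)]] comp(3) by blast
qed

lemma cg_gen:
  assumes "(k, g) \<in> F" and "\<And>y z. (\<forall>j<k. y j = z j) \<Longrightarrow> g y = g z"
    and "\<And>j. j < k \<Longrightarrow> h j \<in> clone_gen F m"
  shows "(\<lambda>x. g (\<lambda>j. h j x)) \<in> clone_gen F m"
proof -
  have "(\<lambda>x. g (\<lambda>j. if j < k then h j x else 0)) \<in> clone_gen F m"
    by (rule clone_gen.comp[OF assms(1)]) (use assms(3) in auto)
  moreover have "(\<lambda>x. g (\<lambda>j. if j < k then h j x else 0)) = (\<lambda>x. g (\<lambda>j. h j x))"
    by (rule ext, rule assms(2)) auto
  ultimately show ?thesis by simp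
qed

lemma cg_const:
  assumes "goodF F" "0 < m"
  shows "(\<lambda>x. c) \<in> clone_gen F m"
proof -
  have "(1, \<lambda>x::nat\<Rightarrow>8. c) \<in> F" using assms(1) unfolding goodF_def by blast
  from cg_gen[OF this, of "\<lambda>j x. x 0" m] assms(2) show ?thesis
    by (auto intro: clone_gen.proj)
qed

lemma cg_add:
  assumes "goodF F" "g \<in> clone_gen F m" "h \<in> clone_gen F m"
  shows "(\<lambda>x. g x + h x) \<in> clone_gen F m"
proof -
  have "(2, \<lambda>x::nat\<Rightarrow>8. x 0 + x 1) \<in> F" using assms(1) unfolding goodF_def by blast
  from cg_gen[OF this, of "\<lambda>j. if j = 0 then g else h" m] assms(2,3) show ?thesis
    by auto
qed

lemma cg_smul:
  assumes "goodF F" "0 < m" "g \<in> clone_gen F m"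
  shows "(\<lambda>x. of_nat N * g x) \<in> clone_gen F m"
proof (induction N)
  case 0
  then show ?case using cg_const[OF assms(1,2), of 0] by simp
next
  case (Suc N)
  have "(\<lambda>x. of_nat N * g x + g x) \<in> clone_gen F m"
    by (rule cg_add[OF assms(1) Suc assms(3)])
  then show ?case by (simp add: algebra_simps)
qed

lemma cg_sum:
  fixes N :: nat and g :: "nat \<Rightarrow> z8op"
  assumes "goodF F" "0 < m"
  shows "(\<forall>i<N. g i \<in> clone_gen F m) \<Longrightarrow> (\<lambda>x. \<Sum>i<N. g i x) \<in> clone_gen F m"
proof (induction N)
  case 0
  then show ?case using cg_const[OF assms(1,2), of 0] by simp
next
  case (Suc N)
  have "(\<lambda>x. (\<Sum>i<N. g i x) + g N x) \<in> clone_gen F m"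
    by (rule cg_add[OF assms(1)]) (use Suc in auto)
  then show ?case by simp
qed

lemma cg_upd2:
  assumes "g \<in> clone_gen F m" "k < m" "l < m" "A \<in> clone_gen F m" "B \<in> clone_gen F m"
  shows "(\<lambda>x. g (x(k := A x, l := B x))) \<in> clone_gen F m"
proof -
  have "(\<lambda>x. g (\<lambda>j. (if j = l then B else if j = k then A else (\<lambda>x. x j)) x)) \<in> clone_gen F m"
    by (rule cg_subst'[OF assms(1)]) (use assms in \<open>auto intro: clone_gen.proj\<close>)
  moreover have "(\<lambda>j. (if j = l then B else if j = k then A else (\<lambda>x. x j)) x) = x(k := A x, l := B x)" for x
    by auto
  ultimately show ?thesis by simp
qed

lemma cg_upd1:
  assumes "g \<in> clone_gen F m" "k < m" "A \<in> clone_gen F m"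
  shows "(\<lambda>x. g (x(k := A x))) \<in> clone_gen F m"
  using cg_upd2[OF assms(1,2,2) cg_proj[OF assms(2)] assms(3)] by simp

definition Fset :: "nat \<Rightarrow> z8op \<Rightarrow> (nat \<times> z8op) set" where
  "Fset k f = {(k, f), (2, \<lambda>x. x 0 + x 1)} \<union> {(1, \<lambda>x. c) | c. True}"

lemma goodF_Fset: "goodF (Fset k f)"
  unfolding goodF_def Fset_def by auto

lemma C_Fset: "C k f = clone_of (Fset k f)"
  unfolding C_def Fset_def by simp

lemma clone_of_mono:
  assumes "f \<in> clone_gen (Fset n g) n"
  shows "clone_of (Fset n f) \<subseteq> clone_of (Fset n g)"
proof -
  have gen: "h \<in> clone_gen (Fset n g) k" if "(k, h) \<in> Fset n f" for k h
  proof -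
    from that consider "k = n" "h = f" | "k = 2" "h = (\<lambda>x. x 0 + x 1)" | c where "k = 1" "h = (\<lambda>x. c)"
      unfolding Fset_def by auto
    then show ?thesis
    proof cases
      case 1 then show ?thesis using assms by simp
    next
      case 2
      have "(\<lambda>x. x 0 + x 1) \<in> clone_gen (Fset n g) 2"
        by (rule cg_add[OF goodF_Fset]) (auto intro: clone_gen.proj)
      then show ?thesis using 2 by simp
    next
      case 3 then show ?thesis using cg_const[OF goodF_Fset] by simp
    qed
  qed
  show ?thesis unfolding clone_of_def using cg_mono[OF gen] by auto
qed

lemma C_eqI:
  assumes "f \<in> clone_gen (Fset n g) n" "g \<in> clone_gen (Fset n f) n"
  shows "C n f = C n g"
  unfolding C_Fset using clone_of_mono[OF assms(1)] clone_of_mono[OF assms(2)] by blast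

lemma cg_self:
  assumes "\<And>y z. (\<forall>j<n. y j = z j) \<Longrightarrow> f y = f z"
    and "\<And>j. j < n \<Longrightarrow> h j \<in> clone_gen (Fset n f) m"
  shows "(\<lambda>x. f (\<lambda>j. h j x)) \<in> clone_gen (Fset n f) m"
  by (rule cg_gen[OF _ assms]) (auto simp: Fset_def)

lemma cg_self0:
  assumes "\<And>y z. (\<forall>j<n. y j = z j) \<Longrightarrow> f y = f z"
  shows "f \<in> clone_gen (Fset n f) n"
proof -
  have "(\<lambda>x. f (\<lambda>j. x j)) \<in> clone_gen (Fset n f) n"
    using cg_self[where n=n and f=f and h="\<lambda>j x. x j" and m=n] assms
    by (auto intro: clone_gen.proj)
  then show ?thesis by simp
qed



lemma all8: "(\<forall>x::8. P x) \<longleftrightarrow> P 0 \<and> P 1 \<and> P 2 \<and> P 3 \<and> P 4 \<and> P 5 \<and> P 6 \<and> P 7"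
proof
  assume h: "P 0 \<and> P 1 \<and> P 2 \<and> P 3 \<and> P 4 \<and> P 5 \<and> P 6 \<and> P 7"
  show "\<forall>x::8. P x"
  proof
    fix x :: 8
    obtain z where z: "x = of_int z" "0 \<le> z" "z < 8"
      by (cases x rule: bit0_cases) auto
    then have "z \<in> {0,1,2,3,4,5,6,7}" by auto
    then show "P x" using h z(1) by auto
  qed
qed auto

lemma eight0: "(8::8) = 0" by simp
lemma seven: "(7::8) = -1" by simp
lemma neg7: "-(7 * y) = (y::8)" by (simp add: seven)

definition prodn :: "nat \<Rightarrow> (nat \<Rightarrow> 8) \<Rightarrow> 8" where "prodn n x = (\<Prod>i<n. x i)"
definition Dop :: "nat \<Rightarrow> nat \<Rightarrow> z8op" where "Dop n i = (\<lambda>x. 2 * prodn n x * (1 - x i ^ 2))"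
definition Hop :: "nat \<Rightarrow> nat \<Rightarrow> z8op" where "Hop n i = (\<lambda>x. 2 * prodn n x * x i * (1 - x i))"
definition M4 :: "nat \<Rightarrow> z8op" where "M4 n = (\<lambda>x. 4 * prodn n x)"
definition P0 :: "nat \<Rightarrow> z8op" where "P0 n = (\<lambda>x. 2 * prodn n x)"

lemma prod_split1: "k < n \<Longrightarrow> prodn n y = y k * (\<Prod>j\<in>{..<n}-{k}. y j)"
  unfolding prodn_def by (simp add: prod.remove)

lemma prod_split2: "k < n \<Longrightarrow> l < n \<Longrightarrow> k \<noteq> l \<Longrightarrow>
   prodn n y = y k * y l * (\<Prod>j\<in>{..<n}-{k}-{l}. y j)"
proof -
  assume h: "k < n" "l < n" "k \<noteq> l"
  have "prodn n y = y k * (\<Prod>j\<in>{..<n}-{k}. y j)" by (rule prod_split1[OF h(1)])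
  also have "(\<Prod>j\<in>{..<n}-{k}. y j) = y l * (\<Prod>j\<in>{..<n}-{k}-{l}. y j)"
    using h by (subst prod.remove[of _ l]) auto
  finally show ?thesis by (simp add: mult.assoc)
qed

lemma sum_split2: fixes g :: "nat \<Rightarrow> 'a::comm_monoid_add" shows "k < n \<Longrightarrow> l < n \<Longrightarrow> k \<noteq> l \<Longrightarrow>
   (\<Sum>j<n. g j) = g k + g l + (\<Sum>j\<in>{..<n}-{k}-{l}. g j)"
proof -
  assume h: "k < n" "l < n" "k \<noteq> l"
  have "(\<Sum>j<n. g j) = g k + (\<Sum>j\<in>{..<n}-{k}. g j)" using h by (subst sum.remove[of _ k]) auto
  also have "(\<Sum>j\<in>{..<n}-{k}. g j) = g l + (\<Sum>j\<in>{..<n}-{k}-{l}. g j)"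
    using h by (subst sum.remove[of _ l]) auto
  finally show ?thesis by (simp add: add.assoc)
qed

definition Rr :: "nat \<Rightarrow> nat \<Rightarrow> nat \<Rightarrow> (nat \<Rightarrow> 8) \<Rightarrow> 8" where
  "Rr n k l x = (\<Prod>j\<in>{..<n}-{k}-{l}. x j)"
definition Tt :: "nat \<Rightarrow> (nat \<Rightarrow> nat) \<Rightarrow> (nat \<Rightarrow> nat) \<Rightarrow> nat \<Rightarrow> nat \<Rightarrow> nat \<Rightarrow> (nat \<Rightarrow> 8) \<Rightarrow> 8" where
  "Tt n a b c k l x = (\<Sum>j\<in>{..<n}-{k}-{l}. of_nat (a j) * x j ^ 2) + (\<Sum>j\<in>{..<n}-{k}-{l}. of_nat (b j) * x j) + of_nat c"

lemma Rr_upd: "Rr n k l (x(k := A, l := B)) = Rr n k l x"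
  unfolding Rr_def by (intro prod.cong) auto
lemma Tt_upd: "Tt n a b c k l (x(k := A, l := B)) = Tt n a b c k l x"
  unfolding Tt_def by (intro arg_cong2[where f="(+)"] sum.cong) auto

lemma gop_split2:
  assumes "k < n" "l < n" "k \<noteq> l"
  shows "gop n a b c y = 2 * (y k * y l * Rr n k l y) *
     (of_nat (a k) * y k ^ 2 + of_nat (a l) * y l ^ 2 + of_nat (b k) * y k + of_nat (b l) * y l + Tt n a b c k l y)"
proof -
  have p: "(\<Prod>i<n. y i) = y k * y l * Rr n k l y"
    using prod_split2[OF assms] unfolding prodn_def Rr_def .
  have s1: "(\<Sum>i<n. of_nat (a i) * y i ^ 2) = of_nat (a k) * y k ^ 2 + of_nat (a l) * y l ^ 2 +
      (\<Sum>j\<in>{..<n}-{k}-{l}. of_nat (a j) * y j ^ 2)"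
    by (rule sum_split2[OF assms])
  have s2: "(\<Sum>i<n. of_nat (b i) * y i) = of_nat (b k) * y k + of_nat (b l) * y l +
      (\<Sum>j\<in>{..<n}-{k}-{l}. of_nat (b j) * y j)"
    by (rule sum_split2[OF assms])
  show ?thesis unfolding gop_def p s1 s2 Tt_def by (simp add: algebra_simps)
qed

lemma gop_upd2:
  assumes "k < n" "l < n" "k \<noteq> l"
  shows "gop n a b c (x(k := A, l := B)) = 2 * (A * B * Rr n k l x) *
     (of_nat (a k) * A ^ 2 + of_nat (a l) * B ^ 2 + of_nat (b k) * A + of_nat (b l) * B + Tt n a b c k l x)"
  using gop_split2[OF assms, of a b c "x(k := A, l := B)"] assms by (simp add: Rr_upd Tt_upd)

lemma polyE0: "2*(u+1)*u*v*(3*u+3*v) = 2*u*v*(1-u^2)" for u v :: 8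
proof -
  have "\<forall>u v::8. 2*(u+1)*u*v*(3*u+3*v) = 2*u*v*(1-u^2)" unfolding all8 by simp
  then show ?thesis by blast
qed

lemma polyE1: "2*(u+1)*u*v*(3*u+3*v+2) = 2*u*v*(1-u^2)" for u v :: 8
proof -
  have "\<forall>u v::8. 2*(u+1)*u*v*(3*u+3*v+2) = 2*u*v*(1-u^2)" unfolding all8 by simp
  then show ?thesis by blast
qed

lemma polar:
  assumes "k < n" "l < n" "k \<noteq> l" "a k = 1" "b k \<in> {0,1}"
  shows "Dop n k x = gop n a b c (x(k := x k + x l, l := x k + 1))
     + 7 * gop n a b c (x(k := x l, l := x k + 1)) + 7 * gop n a b c (x(k := x k, l := x k + 1))"
proof -
  define u where "u = x k"
  define v where "v = x l"
  define R where "R = Rr n k l x"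
  define C where "C = of_nat (a l) * (u+1) ^ 2 + of_nat (b l) * (u+1) + Tt n a b c k l x"
  define bk :: 8 where "bk = of_nat (b k)"
  have D: "Dop n k x = R * (2*u*v*(1-u^2))"
    unfolding Dop_def prod_split2[OF assms(1-3)] u_def v_def R_def Rr_def by (simp add: algebra_simps)
  have g: "gop n a b c (x(k := A, l := u + 1)) = 2 * (A * (u+1) * R) * (A^2 + bk * A + C)" for A
    unfolding gop_upd2[OF assms(1-3)] using assms(4) by (simp add: C_def R_def bk_def algebra_simps)
  have "gop n a b c (x(k := x k + x l, l := x k + 1))
     + 7 * gop n a b c (x(k := x l, l := x k + 1)) + 7 * gop n a b c (x(k := x k, l := x k + 1))
     = R * (2*(u+1)*u*v*(3*u+3*v+2*bk))"
    unfolding u_def[symmetric] v_def[symmetric] g seven by (simp add: algebra_simps power2_eq_square)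
  also have "\<dots> = R * (2*u*v*(1-u^2))"
    using assms(5) polyE0 polyE1 by (auto simp: bk_def)
  finally show ?thesis using D by simp
qed


lemma fin8: "\<forall>u::8. P u \<Longrightarrow> P u" by blast

lemma I1: assumes "k < n" shows "Dop n k (x(k := 2 * x k)) = M4 n x"
proof -
  define R where "R = (\<Prod>j\<in>{..<n}-{k}. x j)"
  have r: "(\<Prod>j\<in>{..<n}-{k}. (x(k := 2 * x k)) j) = R" unfolding R_def by (intro prod.cong) auto
  have e: "4*u*(1-4*u^2) = 4*u" for u :: 8
    by (rule fin8[of "\<lambda>u. 4*u*(1-4*u^2) = 4*u"]) (unfold all8, simp)
  have "Dop n k (x(k := 2 * x k)) = R * (4*x k*(1-4*x k^2))"
    unfolding Dop_def prod_split1[OF assms, of "x(k := 2 * x k)"] r by (simp add: algebra_simps power2_eq_square)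
  also have "\<dots> = R * (4 * x k)" by (simp only: e)
  also have "\<dots> = M4 n x" unfolding M4_def prod_split1[OF assms, of x] R_def by (simp add: algebra_simps)
  finally show ?thesis .
qed

lemma I2: assumes "k < n" shows "Dop n k (x(k := x k - 1)) = Hop n k x"
proof -
  define R where "R = (\<Prod>j\<in>{..<n}-{k}. x j)"
  have r: "(\<Prod>j\<in>{..<n}-{k}. (x(k := x k - 1)) j) = R" unfolding R_def by (intro prod.cong) auto
  have e: "2*(u-1)*(1-(u-1)^2) = 2*u*u*(1-u)" for u :: 8
    by (rule fin8[of "\<lambda>u. 2*(u-1)*(1-(u-1)^2) = 2*u*u*(1-u)"]) (unfold all8, simp)
  have "Dop n k (x(k := x k - 1)) = R * (2*(x k-1)*(1-(x k-1)^2))"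
    unfolding Dop_def prod_split1[OF assms, of "x(k := x k - 1)"] r by (simp add: algebra_simps)
  also have "\<dots> = R * (2*x k*x k*(1-x k))" by (simp only: e)
  also have "\<dots> = Hop n k x" unfolding Hop_def prod_split1[OF assms, of x] R_def by (simp add: algebra_simps)
  finally show ?thesis .
qed

lemma I3: assumes "k < n" "i < n" "k \<noteq> i" shows "Dop n k (x(k := x i, i := x k)) = Dop n i x"
proof -
  have r: "(\<Prod>j\<in>{..<n}-{k}-{i}. (x(k := x i, i := x k)) j) = (\<Prod>j\<in>{..<n}-{k}-{i}. x j)"
    by (intro prod.cong) auto
  show ?thesis
    unfolding Dop_def prod_split2[OF assms, of "x(k := x i, i := x k)"] prod_split2[OF assms, of x] r
    using assms by (simp add: algebra_simps)
qed

lemma prod_0: "1 \<le> n \<Longrightarrow> prodn n x = x 0 * (\<Prod>i\<in>{1..<n}. x i)"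
proof -
  assume "1 \<le> n"
  then have "{..<n} - {0} = {1..<n}" by auto
  then show ?thesis using prod_split1[of 0 n x] \<open>1 \<le> n\<close> by simp
qed

lemma I4: assumes "1 \<le> n" shows "2 * w_op n x = M4 n x + 7 * Dop n 0 x"
  unfolding w_op_def M4_def Dop_def seven prodn_def[symmetric] by (simp add: algebra_simps)

lemma I4b: assumes "1 \<le> n" shows "2 * w_op n (x(0 := 2 * x 0)) = M4 n x"
proof -
  define R where "R = (\<Prod>j\<in>{1..<n}. x j)"
  have r: "(\<Prod>j\<in>{1..<n}. (x(0 := 2 * x 0)) j) = R" unfolding R_def by (intro prod.cong) auto
  have e: "2*(2*u)*((2*u)^2+1) = 4*u" for u :: 8
    by (rule fin8[of "\<lambda>u. 2*(2*u)*((2*u)^2+1) = 4*u"]) (unfold all8, simp)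
  have "2 * w_op n (x(0 := 2 * x 0)) = R * (2*(2*x 0)*((2*x 0)^2+1))"
    unfolding w_op_def prodn_def[symmetric] prod_0[OF assms, of "x(0 := 2 * x 0)"] r by (simp add: algebra_simps)
  also have "\<dots> = R * (4 * x 0)" by (simp only: e)
  also have "\<dots> = M4 n x" unfolding M4_def prod_0[OF assms, of x] R_def by (simp add: algebra_simps)
  finally show ?thesis .
qed

lemma q_prod: "1 \<le> n \<Longrightarrow> q_op n x = x 0 ^ 3 * (\<Prod>i\<in>{1..<n}. x i)"
  unfolding q_op_def by simp

lemma I5: assumes "1 \<le> n" shows "2 * q_op n x = P0 n x + 7 * Dop n 0 x"
  unfolding q_prod[OF assms] P0_def Dop_def prod_0[OF assms] seven by (simp add: algebra_simps power2_eq_square power3_eq_cube)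

lemma q_prod2: assumes "2 \<le> n" shows "q_op n y = y 0 ^ 3 * y 1 * (\<Prod>i\<in>{2..<n}. y i)"
proof -
  have "{1..<n} = insert 1 {2..<n}" using assms by auto
  then show ?thesis unfolding q_op_def by (simp add: mult.assoc)
qed

lemma I6: assumes "2 \<le> n"
  shows "P0 n x = 3 * (2 * q_op n (x(0 := x 1 + 2, 1 := x 0 + 1))) + 2 * q_op n (x(0 := x 0 + 2, 1 := x 0 + x 1 + 3))
     + 7 * (2 * q_op n (x(0 := x 0 + x 1 + 2, 1 := x 0 + 3)))"
proof -
  define R where "R = (\<Prod>j\<in>{2..<n}. x j)"
  have r: "(\<Prod>j\<in>{2..<n}. (x(0 := A, 1 := B)) j) = R" for A B unfolding R_def by (intro prod.cong) auto
  have e: "\<forall>u v::8. 3*(2*(v+2)^3*(u+1)) + 2*(u+2)^3*(u+v+3) + 7*(2*(u+v+2)^3*(u+3)) = 2*u*v"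
    unfolding all8 by simp
  have p: "P0 n x = R * (2 * x 0 * x 1)"
  proof -
    have h1: "prodn n x = x 0 * (\<Prod>i\<in>{1..<n}. x i)" using prod_0[of n x] assms by simp
    have "{1..<n} = insert 1 {2..<n}" using assms by auto
    then have "(\<Prod>i\<in>{1..<n}. x i) = x 1 * R" by (simp add: R_def)
    then show ?thesis unfolding P0_def h1 by (simp add: algebra_simps)
  qed
  have e1: "3*(2*(x 1+2)^3*(x 0+1)) + 2*(x 0+2)^3*(x 0+x 1+3) + 7*(2*(x 0+x 1+2)^3*(x 0+3)) = 2*x 0*x 1"
    using e by blast
  have "3 * (2 * q_op n (x(0 := x 1 + 2, 1 := x 0 + 1))) + 2 * q_op n (x(0 := x 0 + 2, 1 := x 0 + x 1 + 3))
     + 7 * (2 * q_op n (x(0 := x 0 + x 1 + 2, 1 := x 0 + 3)))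
     = R * (3*(2*(x 1+2)^3*(x 0+1)) + 2*(x 0+2)^3*(x 0+x 1+3) + 7*(2*(x 0+x 1+2)^3*(x 0+3)))"
    unfolding q_prod2[OF assms] r by (simp add: algebra_simps)
  then show ?thesis unfolding p e1 by simp
qed


lemma gop1: "gop 1 a b c x = 2 * x 0 * (of_nat (a 0) * x 0 ^ 2 + of_nat (b 0) * x 0 + of_nat c)"
  by (simp add: gop_def)
lemma Dop1: "Dop 1 0 x = 2 * x 0 * (1 - x 0 ^ 2)"
  by (simp add: Dop_def prodn_def)

lemma n1_b0: assumes "a 0 = 1" "b 0 = 0"
  shows "Dop 1 0 x = of_nat (2 + 2 * c) * x 0 + 7 * gop 1 a b c x"
  unfolding Dop1 gop1 assms seven by (simp add: algebra_simps power2_eq_square)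

lemma n1_b1: assumes "a 0 = 1" "b 0 = 1"
  shows "Dop 1 0 x = of_nat (4 + 2 * c) * x 0 + of_nat (4 + 2 * c) + 7 * gop 1 a b c (x(0 := x 0 + 1))"
proof -
  have e: "\<forall>u cc::8. 2*u*(1-u^2) = (4+2*cc)*u + (4+2*cc) + 7*(2*(u+1)*((u+1)^2 + (u+1) + cc))"
    unfolding all8 by simp
  show ?thesis unfolding Dop1 gop1 assms using e by simp
qed

lemma decomp:
  "gop n a b c x = of_nat (sum a {..<n} + sum b {..<n} + c) * P0 n x
     + (\<Sum>i<n. of_nat (a i + b i) * (7 * Dop n i x)) + (\<Sum>i<n. of_nat (b i) * Hop n i x)"
proof -
  have t1: "2 * prodn n x * (of_nat (a i) * x i ^ 2) = of_nat (a i) * P0 n x + of_nat (a i) * (7 * Dop n i x)" for i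
    unfolding P0_def Dop_def seven by (simp add: algebra_simps power2_eq_square)
  have t2: "2 * prodn n x * (of_nat (b i) * x i) = of_nat (b i) * P0 n x + of_nat (b i) * (7 * Dop n i x) + of_nat (b i) * Hop n i x" for i
    unfolding P0_def Dop_def Hop_def seven by (simp add: algebra_simps power2_eq_square)
  have "gop n a b c x = (\<Sum>i<n. 2 * prodn n x * (of_nat (a i) * x i ^ 2)) + (\<Sum>i<n. 2 * prodn n x * (of_nat (b i) * x i)) + of_nat c * P0 n x"
    unfolding gop_def P0_def prodn_def by (simp add: sum_distrib_left algebra_simps)
  also have "\<dots> = (\<Sum>i<n. of_nat (a i) * P0 n x + of_nat (a i) * (7 * Dop n i x))
      + (\<Sum>i<n. of_nat (b i) * P0 n x + of_nat (b i) * (7 * Dop n i x) + of_nat (b i) * Hop n i x) + of_nat c * P0 n x"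
    unfolding t1 t2 ..
  also have "\<dots> = of_nat (sum a {..<n} + sum b {..<n} + c) * P0 n x
     + (\<Sum>i<n. of_nat (a i + b i) * (7 * Dop n i x)) + (\<Sum>i<n. of_nat (b i) * Hop n i x)"
    by (simp add: sum.distrib sum_distrib_right distrib_right add_ac)
  finally show ?thesis .
qed

lemma Seven: "even S \<Longrightarrow> of_nat S * P0 n x = of_nat (S div 2) * M4 n x"
  by (elim evenE) (simp add: P0_def M4_def algebra_simps)

lemma Sodd: assumes "odd S" shows "(of_nat S :: 8) * of_nat S = 1"
proof -
  obtain t where t: "S = 2 * t + 1" using assms oddE by blast
  obtain r where r: "t * (t + 1) = 2 * r" by (metis dvd_def even_mult_iff odd_even_add odd_one)
  have "S * S = 8 * r + 1" using t r by (simp add: algebra_simps)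
  then have "(of_nat S :: 8) * of_nat S = of_nat (8 * r + 1)" by (metis of_nat_mult)
  also have "\<dots> = 1" by (simp add: eight0)
  finally show ?thesis .
qed



lemma cg_xc: "goodF F \<Longrightarrow> i < n \<Longrightarrow> (\<lambda>x. x i + c) \<in> clone_gen F n"
  by (rule cg_add) (auto intro: clone_gen.proj cg_const)

lemma cg_xx: "goodF F \<Longrightarrow> i < n \<Longrightarrow> j < n \<Longrightarrow> (\<lambda>x. x i + x j) \<in> clone_gen F n"
  by (rule cg_add) (auto intro: clone_gen.proj)

lemma cg_eq: "g \<in> K \<Longrightarrow> (\<And>x. g x = h x) \<Longrightarrow> h \<in> K"
proof -
  assume "g \<in> K" "\<And>x. g x = h x"
  then have "g = h" by auto
  then show "h \<in> K" using \<open>g \<in> K\<close> by simp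
qed

lemma chain:
  assumes F: "goodF F" and n: "0 < n" and k: "k < n" and D: "Dop n k \<in> clone_gen F n"
  shows "\<forall>i<n. Dop n i \<in> clone_gen F n" "\<forall>i<n. Hop n i \<in> clone_gen F n" "M4 n \<in> clone_gen F n"
proof -
  show Dall: "\<forall>i<n. Dop n i \<in> clone_gen F n"
  proof (intro allI impI)
    fix i assume i: "i < n"
    show "Dop n i \<in> clone_gen F n"
    proof (cases "i = k")
      case True then show ?thesis using D by simp
    next
      case False
      have "(\<lambda>x. Dop n k (x(k := x i, i := x k))) \<in> clone_gen F n"
        by (rule cg_upd2[OF D k i]) (auto intro: clone_gen.proj i k)
      then show ?thesis by (rule cg_eq) (rule I3[OF k i], use False in auto)
    qed
  qed
  show "\<forall>i<n. Hop n i \<in> clone_gen F n"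
  proof (intro allI impI)
    fix i assume i: "i < n"
    have "(\<lambda>x. Dop n i (x(i := x i + - 1))) \<in> clone_gen F n"
      by (rule cg_upd1[OF _ i cg_xc[OF F i, of "-1"]]) (use Dall i in auto)
    then show "Hop n i \<in> clone_gen F n" by (rule cg_eq) (use I2[OF i] in simp)
  qed
  have "(\<lambda>x. Dop n k (x(k := x k + x k))) \<in> clone_gen F n"
    by (rule cg_upd1[OF D k cg_xx[OF F k k]])
  then show "M4 n \<in> clone_gen F n" by (rule cg_eq) (use I1[OF k] in \<open>simp add: mult_2[symmetric]\<close>)
qed

lemma cg_seven: "goodF F \<Longrightarrow> 0 < n \<Longrightarrow> g \<in> clone_gen F n \<Longrightarrow> (\<lambda>x. 7 * g x) \<in> clone_gen F n"
  using cg_smul[of F n g 7] by simp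

lemma build_gen:
  assumes F: "goodF F" and n: "0 < n" and D: "\<forall>i<n. Dop n i \<in> clone_gen F n" and H: "\<forall>i<n. Hop n i \<in> clone_gen F n"
    and Z: "Z \<in> clone_gen F n"
  shows "(\<lambda>x. of_nat N * Z x + (\<Sum>i<n. of_nat (a i + b i) * (7 * Dop n i x)) + (\<Sum>i<n. of_nat (b i) * Hop n i x)) \<in> clone_gen F n"
  apply (rule cg_add[OF F])+
    apply (rule cg_smul[OF F n Z])
   apply (rule cg_sum[OF F n]) using D apply (auto simp del: of_nat_add intro!: cg_smul[OF F n] cg_seven[OF F n])[1]
  apply (rule cg_sum[OF F n]) using H apply (auto simp del: of_nat_add intro!: cg_smul[OF F n])
  done

lemma build_even:
  assumes F: "goodF F" and n: "0 < n" and D: "\<forall>i<n. Dop n i \<in> clone_gen F n" and H: "\<forall>i<n. Hop n i \<in> clone_gen F n"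
    and M: "M4 n \<in> clone_gen F n" and S: "even (sum a {..<n} + sum b {..<n} + c)"
  shows "gop n a b c \<in> clone_gen F n"
  using build_gen[OF F n D H M, of "(sum a {..<n} + sum b {..<n} + c) div 2" a b]
  by (rule cg_eq) (simp only: decomp[of n a b c] Seven[OF S])

lemma build_P0:
  assumes F: "goodF F" and n: "0 < n" and D: "\<forall>i<n. Dop n i \<in> clone_gen F n" and H: "\<forall>i<n. Hop n i \<in> clone_gen F n"
    and P: "P0 n \<in> clone_gen F n"
  shows "gop n a b c \<in> clone_gen F n"
  using build_gen[OF F n D H P, of "sum a {..<n} + sum b {..<n} + c" a b]
  by (rule cg_eq) (simp only: decomp[of n a b c])

lemma get_P0:
  assumes F: "goodF F" and n: "0 < n" and D: "\<forall>i<n. Dop n i \<in> clone_gen F n" and H: "\<forall>i<n. Hop n i \<in> clone_gen F n"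
    and G: "gop n a b c \<in> clone_gen F n" and S: "odd (sum a {..<n} + sum b {..<n} + c)"
  shows "P0 n \<in> clone_gen F n"
proof -
  define S where "S = sum a {..<n} + sum b {..<n} + c"
  have m: "(\<lambda>x. of_nat S * (gop n a b c x + (\<Sum>i<n. of_nat (a i + b i) * Dop n i x) + (\<Sum>i<n. of_nat (b i) * (7 * Hop n i x)))) \<in> clone_gen F n"
    apply (rule cg_smul[OF F n])
    apply (rule cg_add[OF F])+
      apply (rule G)
     apply (rule cg_sum[OF F n]) using D apply (auto simp del: of_nat_add intro!: cg_smul[OF F n])[1]
    apply (rule cg_sum[OF F n]) using H apply (auto simp del: of_nat_add intro!: cg_smul[OF F n] cg_seven[OF F n])
    done
  have z1: "(\<Sum>i<n. of_nat (a i + b i) * (7 * Dop n i x)) + (\<Sum>i<n. of_nat (a i + b i) * Dop n i x) = 0" for x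
  proof -
    have "(\<Sum>i<n. of_nat (a i + b i) * (7 * Dop n i x)) + (\<Sum>i<n. of_nat (a i + b i) * Dop n i x)
        = (\<Sum>i<n. of_nat (a i + b i) * (8 * Dop n i x))"
      by (simp add: sum.distrib[symmetric] algebra_simps)
    then show ?thesis by (simp add: eight0)
  qed
  have z2: "(\<Sum>i<n. of_nat (b i) * Hop n i x) + (\<Sum>i<n. of_nat (b i) * (7 * Hop n i x)) = 0" for x
  proof -
    have "(\<Sum>i<n. of_nat (b i) * Hop n i x) + (\<Sum>i<n. of_nat (b i) * (7 * Hop n i x))
        = (\<Sum>i<n. of_nat (b i) * (8 * Hop n i x))"
      by (simp add: sum.distrib[symmetric] algebra_simps)
    then show ?thesis by (simp add: eight0)
  qed
  have "of_nat S * (gop n a b c x + (\<Sum>i<n. of_nat (a i + b i) * Dop n i x) + (\<Sum>i<n. of_nat (b i) * (7 * Hop n i x))) = P0 n x" for x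
  proof -
    have "gop n a b c x + (\<Sum>i<n. of_nat (a i + b i) * Dop n i x) + (\<Sum>i<n. of_nat (b i) * (7 * Hop n i x))
      = of_nat S * P0 n x + ((\<Sum>i<n. of_nat (a i + b i) * (7 * Dop n i x)) + (\<Sum>i<n. of_nat (a i + b i) * Dop n i x))
        + ((\<Sum>i<n. of_nat (b i) * Hop n i x) + (\<Sum>i<n. of_nat (b i) * (7 * Hop n i x)))"
      unfolding decomp[of n a b c] S_def by (simp add: algebra_simps)
    also have "\<dots> = of_nat S * P0 n x" unfolding z1 z2 by simp
    finally show ?thesis using Sodd[OF S[folded S_def]] by (simp add: mult.assoc[symmetric])
  qed
  then show ?thesis using m by (rule_tac cg_eq) auto
qed


lemma dep_gop: "(\<forall>j<n. y j = z j) \<Longrightarrow> gop n a b c y = gop n a b c z"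
proof -
  assume h: "\<forall>j<n. y j = z j"
  have p: "(\<Prod>i<n. y i) = (\<Prod>i<n. z i)" using h by (intro prod.cong) auto
  have s1: "(\<Sum>i<n. of_nat (a i) * y i ^ 2) = (\<Sum>i<n. of_nat (a i) * z i ^ 2)" using h by (intro sum.cong) auto
  have s2: "(\<Sum>i<n. of_nat (b i) * y i) = (\<Sum>i<n. of_nat (b i) * z i)" using h by (intro sum.cong) auto
  show ?thesis unfolding gop_def p s1 s2 ..
qed

lemma dep_w: "1 \<le> n \<Longrightarrow> (\<forall>j<n. y j = z j) \<Longrightarrow> 2 * w_op n y = 2 * w_op n z"
proof -
  assume n: "1 \<le> n" and h: "\<forall>j<n. y j = z j"
  have p: "(\<Prod>i<n. y i) = (\<Prod>i<n. z i)" using h by (intro prod.cong) auto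
  have "y 0 = z 0" using h n by auto
  then show ?thesis unfolding w_op_def p by simp
qed

lemma dep_q: "1 \<le> n \<Longrightarrow> (\<forall>j<n. y j = z j) \<Longrightarrow> 2 * q_op n y = 2 * q_op n z"
proof -
  assume n: "1 \<le> n" and h: "\<forall>j<n. y j = z j"
  have p: "(\<Prod>i\<in>{1..<n}. y i) = (\<Prod>i\<in>{1..<n}. z i)" using h by (intro prod.cong) auto
  have "y 0 = z 0" using h n by auto
  then show ?thesis unfolding q_op_def p by simp
qed

lemma Dk_from_f:
  assumes n: "1 \<le> n" and G1: "in_G1 n a b c" and k: "k < n" and ak: "a k \<noteq> 0"
  shows "Dop n k \<in> clone_gen (Fset n (gop n a b c)) n"
proof -
  let ?F = "Fset n (gop n a b c)"
  have F: "goodF ?F" by (rule goodF_Fset)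
  have n0: "0 < n" using n by simp
  have fK: "gop n a b c \<in> clone_gen ?F n" by (rule cg_self0) (rule dep_gop)
  have a1: "a k = 1" and bk: "b k \<in> {0,1}" using G1 k ak unfolding in_G1_def by auto
  show ?thesis
  proof (cases "2 \<le> n")
    case True
    define l :: nat where "l = (if k = 0 then 1 else 0)"
    have l: "l < n" "k \<noteq> l" using True k unfolding l_def by auto
    have B: "(\<lambda>x. x k + 1) \<in> clone_gen ?F n" by (rule cg_xc[OF F k])
    have g1: "(\<lambda>x. gop n a b c (x(k := x k + x l, l := x k + 1))) \<in> clone_gen ?F n"
      by (rule cg_upd2[OF fK k l(1) cg_xx[OF F k l(1)] B])
    have g2: "(\<lambda>x. gop n a b c (x(k := x l, l := x k + 1))) \<in> clone_gen ?F n"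
      by (rule cg_upd2[OF fK k l(1) cg_proj[OF l(1)] B])
    have g3: "(\<lambda>x. gop n a b c (x(k := x k, l := x k + 1))) \<in> clone_gen ?F n"
      by (rule cg_upd2[OF fK k l(1) cg_proj[OF k] B])
    have "(\<lambda>x. gop n a b c (x(k := x k + x l, l := x k + 1))
     + 7 * gop n a b c (x(k := x l, l := x k + 1)) + 7 * gop n a b c (x(k := x k, l := x k + 1))) \<in> clone_gen ?F n"
      by (intro cg_add[OF F] g1 cg_seven[OF F n0] g2 g3)
    then show ?thesis by (rule cg_eq) (rule polar[where k=k and n=n and l=l and a=a and b=b and c=c, OF k l a1 bk, symmetric])
  next
    case False
    then have n1: "n = 1" and k0: "k = 0" using n k by auto
    have a0: "a 0 = 1" using a1 k0 by simp
    have x0: "(\<lambda>x. x 0) \<in> clone_gen ?F n" using n by (intro cg_proj) simp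
    from bk k0 have "b 0 = 0 \<or> b 0 = 1" by auto
    then show ?thesis
    proof
      assume b0: "b 0 = 0"
      have "(\<lambda>x. of_nat (2 + 2 * c) * x 0 + 7 * gop n a b c x) \<in> clone_gen ?F n"
        by (intro cg_add[OF F] cg_smul[OF F n0] x0 cg_seven[OF F n0] fK)
      then show ?thesis unfolding n1 k0 by (rule cg_eq) (rule n1_b0[where a=a and b=b and c=c, OF a0 b0, symmetric])
    next
      assume b0: "b 0 = 1"
      have "(\<lambda>x. gop n a b c (x(0 := x 0 + 1))) \<in> clone_gen ?F n"
        by (rule cg_upd1[OF fK _ cg_xc[OF F]]) (use n in auto)
      then have "(\<lambda>x. of_nat (4 + 2 * c) * x 0 + of_nat (4 + 2 * c) + 7 * gop n a b c (x(0 := x 0 + 1))) \<in> clone_gen ?F n"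
        by (intro cg_add[OF F] cg_smul[OF F n0] x0 cg_seven[OF F n0] cg_const[OF F n0])
      then show ?thesis unfolding n1 k0 by (rule cg_eq) (rule n1_b1[where a=a and b=b and c=c, OF a0 b0, symmetric])
    qed
  qed
qed

lemma D0_w: "1 \<le> n \<Longrightarrow> Dop n 0 x = M4 n x + 7 * (2 * w_op n x)"
proof -
  assume n: "1 \<le> n"
  have "M4 n x + 7 * (2 * w_op n x) = 8 * M4 n x + 49 * Dop n 0 x"
    unfolding I4[OF n] by (simp add: algebra_simps)
  moreover have "(8::8) = 0" "(49::8) = 1" by simp_all
  ultimately show ?thesis by simp
qed

lemma D0_q: "1 \<le> n \<Longrightarrow> Dop n 0 x = P0 n x + 7 * (2 * q_op n x)"
proof -
  assume n: "1 \<le> n"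
  have "P0 n x + 7 * (2 * q_op n x) = 8 * P0 n x + 49 * Dop n 0 x"
    unfolding I5[OF n] by (simp add: algebra_simps)
  moreover have "(8::8) = 0" "(49::8) = 1" by simp_all
  ultimately show ?thesis by simp
qed

theorem theorem4p1:
  fixes n :: nat and a b :: "nat \<Rightarrow> nat" and c :: nat
  assumes "n \<ge> 1"
    and "in_G1 n a b c"
    and "\<exists>i<n. a i \<noteq> 0"
  shows "(in_G0 n a b c \<longrightarrow> C n (gop n a b c) = C n (\<lambda>x. 2 * w_op n x))
       \<and> (\<not> in_G0 n a b c \<longrightarrow> C n (gop n a b c) = C n (\<lambda>x. 2 * q_op n x))"
proof -
  note n = assms(1)
  have n0: "0 < n" using n by simp
  have p0: "0 < n" using n by simp
  obtain k where k: "k < n" "a k \<noteq> 0" using assms(3) by blast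
  let ?f = "gop n a b c"
  let ?Ff = "Fset n ?f"
  have Ff: "goodF ?Ff" by (rule goodF_Fset)
  have fK: "?f \<in> clone_gen ?Ff n" by (rule cg_self0) (rule dep_gop)
  have Dk: "Dop n k \<in> clone_gen ?Ff n" by (rule Dk_from_f[OF n assms(2) k])
  note ch = chain[OF Ff n0 k(1) Dk]
  have D0f: "Dop n 0 \<in> clone_gen ?Ff n" using ch(1) n0 by blast
  show ?thesis
  proof (intro conjI impI)
    assume G0: "in_G0 n a b c"
    then have S: "even (sum a {..<n} + sum b {..<n} + c)" unfolding in_G0_def by simp
    let ?W = "\<lambda>x. 2 * w_op n x"
    let ?Fw = "Fset n ?W"
    have Fw: "goodF ?Fw" by (rule goodF_Fset)
    have "(\<lambda>x. M4 n x + 7 * Dop n 0 x) \<in> clone_gen ?Ff n"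
      by (intro cg_add[OF Ff] ch(3) cg_seven[OF Ff n0] D0f)
    then have wK: "?W \<in> clone_gen ?Ff n" by (rule cg_eq) (rule I4[OF n, symmetric])
    have Ww: "?W \<in> clone_gen ?Fw n" by (rule cg_self0) (rule dep_w[OF n])
    have "(\<lambda>x. ?W (x(0 := x 0 + x 0))) \<in> clone_gen ?Fw n"
      by (rule cg_upd1[OF Ww p0 cg_xx[OF Fw p0 p0]])
    then have Mw: "M4 n \<in> clone_gen ?Fw n"
      by (rule cg_eq) (simp only: mult_2[symmetric] I4b[OF n])
    have "(\<lambda>x. M4 n x + 7 * ?W x) \<in> clone_gen ?Fw n"
      by (intro cg_add[OF Fw] cg_seven[OF Fw n0] Ww Mw)
    then have D0w: "Dop n 0 \<in> clone_gen ?Fw n" by (rule cg_eq) (rule D0_w[OF n, symmetric])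
    note chw = chain[OF Fw n0 p0 D0w]
    have "?f \<in> clone_gen ?Fw n" by (rule build_even[OF Fw n0 chw S])
    then show "C n ?f = C n ?W" by (rule C_eqI[OF _ wK])
  next
    assume G0: "\<not> in_G0 n a b c"
    then have S: "odd (sum a {..<n} + sum b {..<n} + c)" using assms(2) unfolding in_G0_def by simp
    have Pf: "P0 n \<in> clone_gen ?Ff n" by (rule get_P0[OF Ff n0 ch(1,2) fK S])
    let ?Q = "\<lambda>x. 2 * q_op n x"
    let ?Fq = "Fset n ?Q"
    have Fq: "goodF ?Fq" by (rule goodF_Fset)
    have "(\<lambda>x. P0 n x + 7 * Dop n 0 x) \<in> clone_gen ?Ff n"
      by (intro cg_add[OF Ff] cg_seven[OF Ff n0] Pf D0f)
    then have qK: "?Q \<in> clone_gen ?Ff n" by (rule cg_eq) (rule I5[OF n, symmetric])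
    have Qq: "?Q \<in> clone_gen ?Fq n" by (rule cg_self0) (rule dep_q[OF n])
    have Pq: "P0 n \<in> clone_gen ?Fq n"
    proof (cases "2 \<le> n")
      case True
      have p1: "1 < n" using True by simp
      have u1: "(\<lambda>x. ?Q (x(0 := x 1 + 2, 1 := x 0 + 1))) \<in> clone_gen ?Fq n"
        by (rule cg_upd2[OF Qq p0 p1 cg_xc[OF Fq p1] cg_xc[OF Fq p0]])
      have u2: "(\<lambda>x. ?Q (x(0 := x 0 + 2, 1 := x 0 + x 1 + 3))) \<in> clone_gen ?Fq n"
        by (rule cg_upd2[OF Qq p0 p1 cg_xc[OF Fq p0] cg_add[OF Fq cg_xx[OF Fq p0 p1] cg_const[OF Fq n0]]])
      have u3: "(\<lambda>x. ?Q (x(0 := x 0 + x 1 + 2, 1 := x 0 + 3))) \<in> clone_gen ?Fq n"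
        by (rule cg_upd2[OF Qq p0 p1 cg_add[OF Fq cg_xx[OF Fq p0 p1] cg_const[OF Fq n0]] cg_xc[OF Fq p0]])
      have "(\<lambda>x. of_nat 3 * ?Q (x(0 := x 1 + 2, 1 := x 0 + 1)) + ?Q (x(0 := x 0 + 2, 1 := x 0 + x 1 + 3))
          + 7 * ?Q (x(0 := x 0 + x 1 + 2, 1 := x 0 + 3))) \<in> clone_gen ?Fq n"
        by (intro cg_add[OF Fq] cg_smul[OF Fq n0] cg_seven[OF Fq n0] u1 u2 u3)
      then show ?thesis by (rule cg_eq) (simp only: I6[OF True] of_nat_numeral)
    next
      case False
      then have n1: "n = 1" using n by simp
      have "(\<lambda>x. x 0 + x 0) \<in> clone_gen ?Fq n" by (rule cg_xx[OF Fq p0 p0])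
      then show ?thesis by (rule cg_eq) (simp add: n1 P0_def prodn_def)
    qed
    have "(\<lambda>x. P0 n x + 7 * ?Q x) \<in> clone_gen ?Fq n"
      by (intro cg_add[OF Fq] cg_seven[OF Fq n0] Qq Pq)
    then have D0q: "Dop n 0 \<in> clone_gen ?Fq n" by (rule cg_eq) (rule D0_q[OF n, symmetric])
    note chq = chain[OF Fq n0 p0 D0q]
    have "?f \<in> clone_gen ?Fq n" by (rule build_P0[OF Fq n0 chq(1,2) Pq])
    then show "C n ?f = C n ?Q" by (rule C_eqI[OF _ qK])
  qed
qed


end
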